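(* Let $M$ be an $m$-dimensional manifold and $C$ a compact subset of $M$. Let $f:\mathbb{R}^n\times M\to\mathbb{R}$ be $C^\infty$, let $x_0\in C$, and define $g:M\to\mathbb{R}$ by $g(x)=f(0,x)$. Assume that $g|_C$ attains an absolute minimum at $x_0$ and that $x_0$ is the only point of $C$ where this minimum is attained; that $g$ has a critical point at $x_0$ with positive definite Hessian there; and that there exists $\zeta>0$ such that for all $p\in\mathbb{R}^n$ with $|p|<\zeta$ the function $M\to\mathbb{R}$, $x\mapsto f(p,x)$, has a critical point at $x_0$. Then there exists $\epsilon>0$ such that for all $p\in\mathbb{R}^n$ with $|p|<\epsilon$, the function $C\to\mathbb{R}$, $x\mapsto f(p,x)$, attains an absolute minimum at $x_0$. *)

theory Defs
  imports "HOL-Analysis.Analysis"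
begin

fun Ck_on :: "nat \<Rightarrow> 'a::euclidean_space set \<Rightarrow> ('a \<Rightarrow> real) \<Rightarrow> bool" where
  "Ck_on 0 S h = continuous_on S h"
| "Ck_on (Suc k) S h =
     (h differentiable_on S \<and>
      (\<forall>b\<in>Basis. Ck_on k S (\<lambda>x. frechet_derivative h (at x) b)))"

definition smooth_on :: "'a::euclidean_space set \<Rightarrow> ('a \<Rightarrow> real) \<Rightarrow> bool" where
  "smooth_on S h \<longleftrightarrow> (\<forall>k. Ck_on k S h)"

definition smooth_map_on :: "'a::euclidean_space set \<Rightarrow> ('a \<Rightarrow> 'b::euclidean_space) \<Rightarrow> bool" where
  "smooth_map_on S F \<longleftrightarrow> (\<forall>b\<in>Basis. smooth_on S (\<lambda>x. F x \<bullet> b))"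

text \<open>The manifold is the whole (Hausdorff, second countable) type 'a; charts are pairs
  (U, phi) with U open and phi a homeomorphism of U onto an open subset of the model
  Euclidean space 'e (dimension m = DIM('e)).\<close>
definition smooth_atlas ::
  "('a::{t2_space,second_countable_topology} set \<times> ('a \<Rightarrow> 'e::euclidean_space)) set \<Rightarrow> bool" where
  "smooth_atlas A \<longleftrightarrow>
     (\<forall>(U,\<phi>)\<in>A. open U \<and> open (\<phi> ` U) \<and> (\<exists>\<psi>. homeomorphism U (\<phi> ` U) \<phi> \<psi>)) \<and>
     (\<Union>(U,\<phi>)\<in>A. U) = UNIV \<and>
     (\<forall>(U,\<phi>)\<in>A. \<forall>(V,\<psi>)\<in>A. smooth_map_on (\<phi> ` (U \<inter> V)) (\<psi> \<circ> inv_into U \<phi>))"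

definition smooth_param_fun ::
  "('a set \<times> ('a \<Rightarrow> 'e::euclidean_space)) set \<Rightarrow> ('n::euclidean_space \<Rightarrow> 'a \<Rightarrow> real) \<Rightarrow> bool" where
  "smooth_param_fun A f \<longleftrightarrow>
     (\<forall>(U,\<phi>)\<in>A. smooth_on (UNIV \<times> \<phi> ` U) (\<lambda>(p,y). f p (inv_into U \<phi> y)))"

definition critical_point ::
  "('a set \<times> ('a \<Rightarrow> 'e::euclidean_space)) set \<Rightarrow> ('a \<Rightarrow> real) \<Rightarrow> 'a \<Rightarrow> bool" where
  "critical_point A F x0 \<longleftrightarrow>
     (\<forall>(U,\<phi>)\<in>A. x0 \<in> U \<longrightarrow> ((F \<circ> inv_into U \<phi>) has_derivative (\<lambda>_. 0)) (at (\<phi> x0)))"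

definition hessian :: "('e::euclidean_space \<Rightarrow> real) \<Rightarrow> 'e \<Rightarrow> 'e \<Rightarrow> 'e \<Rightarrow> real" where
  "hessian h y i j = frechet_derivative (\<lambda>z. frechet_derivative h (at z) j) (at y) i"

definition pos_def_hessian :: "('e::euclidean_space \<Rightarrow> real) \<Rightarrow> 'e \<Rightarrow> bool" where
  "pos_def_hessian h y \<longleftrightarrow>
     (\<forall>v::'e. v \<noteq> 0 \<longrightarrow> (\<Sum>i\<in>Basis. \<Sum>j\<in>Basis. (v \<bullet> i) * (v \<bullet> j) * hessian h y i j) > 0)"

definition pos_def_hessian_at ::
  "('a set \<times> ('a \<Rightarrow> 'e::euclidean_space)) set \<Rightarrow> ('a \<Rightarrow> real) \<Rightarrow> 'a \<Rightarrow> bool" where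
  "pos_def_hessian_at A F x0 \<longleftrightarrow>
     (\<forall>(U,\<phi>)\<in>A. x0 \<in> U \<longrightarrow> pos_def_hessian (F \<circ> inv_into U \<phi>) (\<phi> x0))"

end

theory Submission
  imports Defs
begin

lemma smooth_C2:
  fixes F :: "'a::euclidean_space \<Rightarrow> real"
  assumes "smooth_on S F"
  shows "F differentiable_on S"
    "\<And>b. b \<in> Basis \<Longrightarrow> (\<lambda>x. frechet_derivative F (at x) b) differentiable_on S"
    "\<And>b c. b \<in> Basis \<Longrightarrow> c \<in> Basis \<Longrightarrow>
       continuous_on S (\<lambda>y. frechet_derivative (\<lambda>x. frechet_derivative F (at x) b) (at y) c)"
proof -
  have "Ck_on (Suc (Suc 0)) S F" using assms smooth_on_def by blast
  then show "F differentiable_on S"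
    "\<And>b. b \<in> Basis \<Longrightarrow> (\<lambda>x. frechet_derivative F (at x) b) differentiable_on S"
    "\<And>b c. b \<in> Basis \<Longrightarrow> c \<in> Basis \<Longrightarrow>
       continuous_on S (\<lambda>y. frechet_derivative (\<lambda>x. frechet_derivative F (at x) b) (at y) c)"
    by auto
qed

lemma zero_basis: "(j::'b::euclidean_space) \<in> Basis \<Longrightarrow> ((0::'a::euclidean_space), j) \<in> Basis"
  by (simp add: Basis_prod_def)

lemma lin_exp:
  assumes "linear L"
  shows "L (v::'a::euclidean_space) = (\<Sum>j\<in>Basis. (v \<bullet> j) * (L j :: real))"
  using Linear_Algebra.linear_componentwise[OF assms, of v 1] by simp

lemma local_min:
  fixes F :: "'n::euclidean_space \<times> 'e::euclidean_space \<Rightarrow> real"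
  assumes sm: "smooth_on (UNIV \<times> V) F" and oV: "open V" and y0V: "y0 \<in> V"
    and crit: "\<forall>p. norm p < \<zeta> \<longrightarrow> ((\<lambda>y. F (p,y)) has_derivative (\<lambda>_. 0)) (at y0)"
    and pd: "pos_def_hessian (\<lambda>y. F (0,y)) y0" and zp: "\<zeta> > 0"
  shows "\<exists>\<epsilon>>0. \<exists>r>0. ball y0 r \<subseteq> V \<and>
           (\<forall>p z. norm p < \<epsilon> \<longrightarrow> z \<in> ball y0 r \<longrightarrow> F (p,y0) \<le> F (p,z))"
proof -
  define S where "S = (UNIV::'n set) \<times> V"
  have oS: "open S" using oV by (simp add: S_def open_Times)
  define DF where "DF x = frechet_derivative F (at x)" for x
  define G where "G j = (\<lambda>x. DF x (0,j))" for j
  define DG where "DG j x = frechet_derivative (G j) (at x)" for j x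
  define H where "H i j = (\<lambda>x. DG j x (0,i))" for i j
  define Q where "Q x v = (\<Sum>i\<in>Basis. \<Sum>j\<in>Basis. (v \<bullet> i) * (v \<bullet> j) * H i j x)" for x v
  have d1: "(F has_derivative DF x) (at x)" if "x \<in> S" for x
    using smooth_C2(1)[OF sm[folded S_def]] oS that
    by (simp add: DF_def differentiable_on_eq_differentiable_at frechet_derivative_works)
  have d2: "(G j has_derivative DG j x) (at x)" if "x \<in> S" "j \<in> Basis" for x j
  proof -
    have "G j differentiable_on S"
      using smooth_C2(2)[OF sm[folded S_def] zero_basis[OF that(2)]]
      by (simp add: G_def DF_def)
    then show ?thesis using oS that
      by (simp add: DG_def differentiable_on_eq_differentiable_at frechet_derivative_works)
  qed
  have cH: "continuous_on S (H i j)" if "i \<in> Basis" "j \<in> Basis" for i j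
    using smooth_C2(3)[OF sm[folded S_def] zero_basis[OF that(2)] zero_basis[OF that(1)]]
    by (simp add: H_def DG_def G_def DF_def)
  have pd0: "((\<lambda>y. (p::'n,y)) has_derivative (\<lambda>w. (0,w))) (at z)" for p z
    by (intro has_derivative_Pair has_derivative_const has_derivative_ident)
  have dsec: "((\<lambda>y. F (p,y)) has_derivative (\<lambda>w. DF (p,z) (0,w))) (at z)" if "(p,z) \<in> S" for p z
    using diff_chain_at[OF pd0 d1[OF that]] unfolding o_def .
  have dsecG: "((\<lambda>y. G j (p,y)) has_derivative (\<lambda>w. DG j (p,z) (0,w))) (at z)"
    if "(p,z) \<in> S" "j \<in> Basis" for p z j
    using diff_chain_at[OF pd0 d2[OF that]] unfolding o_def .
  have e1: "DF (p,z) (0,w) = (\<Sum>j\<in>Basis. (w \<bullet> j) * G j (p,z))" if "(p,z) \<in> S" for p z w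
    using lin_exp[OF has_derivative_linear[OF dsec[OF that]], of w] unfolding G_def .
  have e2: "DG j (p,z) (0,w) = (\<Sum>i\<in>Basis. (w \<bullet> i) * H i j (p,z))"
    if "(p,z) \<in> S" "j \<in> Basis" for p z w j
    using lin_exp[OF has_derivative_linear[OF dsecG[OF that]], of w] unfolding H_def .
  have crit0: "DF (p,y0) (0,w) = 0" if "norm p < \<zeta>" for p w
  proof -
    have "(p,y0) \<in> S" using y0V by (simp add: S_def)
    from has_derivative_unique[OF dsec[OF this] crit[rule_format, OF that]]
    show ?thesis by metis
  qed
  have hess: "hessian (\<lambda>y. F (0,y)) y0 i j = H i j (0,y0)" if "i \<in> Basis" "j \<in> Basis" for i j
  proof -
    have eq: "frechet_derivative (\<lambda>y. F (0,y)) (at z) j = G j (0,z)" if "z \<in> V" for z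
    proof -
      have "(0,z) \<in> S" using that by (simp add: S_def)
      from frechet_derivative_at[OF dsec[OF this]] show ?thesis unfolding G_def by metis
    qed
    have "(0,y0) \<in> S" using y0V by (simp add: S_def)
    have "((\<lambda>z. frechet_derivative (\<lambda>y. F (0,y)) (at z) j) has_derivative (\<lambda>w. DG j (0,y0) (0,w))) (at y0)"
      by (rule has_derivative_transform_within_open[OF dsecG[OF \<open>(0,y0) \<in> S\<close> that(2)] oV y0V])
         (use eq in metis)
    from frechet_derivative_at[OF this] show ?thesis
      unfolding hessian_def H_def by metis
  qed
  have Qpos0: "Q (0,y0) v > 0" if "v \<noteq> 0" for v
    using pd that unfolding pos_def_hessian_def Q_def by (simp add: hess)
  have Qscale: "Q x (a *\<^sub>R v) = a^2 * Q x v" for x a v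
    by (simp add: Q_def sum_distrib_left power2_eq_square mult_ac)
  have contQ: "continuous_on (sphere 0 1) (Q (0,y0))"
    unfolding Q_def by (intro continuous_intros)
  obtain u where u: "u \<in> sphere (0::'e) 1" "\<forall>w\<in>sphere 0 1. Q (0,y0) u \<le> Q (0,y0) w"
    using continuous_attains_inf[OF compact_sphere _ contQ] by auto
  define c where "c = Q (0,y0) u"
  have "u \<noteq> 0" using u(1) by (metis mem_sphere_0 norm_zero zero_neq_one)
  then have c0: "c > 0" using Qpos0[of u] by (simp add: c_def)
  have Qlow: "Q (0,y0) v \<ge> c * norm v ^ 2" for v
  proof (cases "v = 0")
    case True then show ?thesis by (simp add: Q_def)
  next
    case False
    define w where "w = (1 / norm v) *\<^sub>R v"
    have "w \<in> sphere 0 1" using False by (simp add: w_def)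
    then have "c \<le> Q (0,y0) w" using u(2) c_def by auto
    moreover have "v = norm v *\<^sub>R w" using False by (simp add: w_def)
    then have "Q (0,y0) v = norm v ^ 2 * Q (0,y0) w" using Qscale by metis
    ultimately show ?thesis by (simp add: mult.commute mult_right_mono)
  qed
  define M where "M x = (\<Sum>i\<in>Basis. \<Sum>j\<in>Basis. \<bar>H i j x - H i j (0,y0)\<bar>)" for x
  have x0S: "(0,y0) \<in> S" using y0V by (simp add: S_def)
  have "isCont (H i j) (0,y0)" if "i \<in> Basis" "j \<in> Basis" for i j
    using cH[OF that] oS x0S continuous_on_eq_continuous_at by blast
  then have "isCont M (0,y0)"
    unfolding M_def by (intro continuous_intros) auto
  moreover have "M (0,y0) = 0" by (simp add: M_def)
  ultimately obtain \<delta> where d0: "\<delta> > 0" and dM: "\<And>x. dist x (0,y0) < \<delta> \<Longrightarrow> M x < c"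
    using c0 unfolding continuous_at_eps_delta by (metis dist_real_def diff_0_right abs_less_iff)
  have Qdiff: "\<bar>Q x v - Q (0,y0) v\<bar> \<le> M x * norm v ^ 2" for x v
  proof -
    have "Q x v - Q (0,y0) v = (\<Sum>i\<in>Basis. \<Sum>j\<in>Basis. (v \<bullet> i) * (v \<bullet> j) * (H i j x - H i j (0,y0)))"
      by (simp add: Q_def sum_subtractf right_diff_distrib)
    also have "\<bar>\<dots>\<bar> \<le> (\<Sum>i\<in>Basis. \<Sum>j\<in>Basis. \<bar>(v \<bullet> i) * (v \<bullet> j) * (H i j x - H i j (0,y0))\<bar>)"
      by (rule order_trans[OF sum_abs sum_mono]) (rule sum_abs)
    also have "\<dots> \<le> (\<Sum>i\<in>Basis. \<Sum>j\<in>Basis. norm v ^ 2 * \<bar>H i j x - H i j (0,y0)\<bar>)"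
    proof (intro sum_mono)
      fix i j :: 'e assume ij: "i \<in> Basis" "j \<in> Basis"
      have "\<bar>v \<bullet> i\<bar> * \<bar>v \<bullet> j\<bar> \<le> norm v * norm v"
        using Basis_le_norm[OF ij(1), of v] Basis_le_norm[OF ij(2), of v]
        by (intro mult_mono) auto
      then show "\<bar>(v \<bullet> i) * (v \<bullet> j) * (H i j x - H i j (0,y0))\<bar> \<le> norm v ^ 2 * \<bar>H i j x - H i j (0,y0)\<bar>"
        by (simp add: abs_mult power2_eq_square mult_right_mono)
    qed
    also have "\<dots> = M x * norm v ^ 2"
      by (simp add: M_def sum_distrib_left mult.commute)
    finally show ?thesis .
  qed
  have Qnn: "Q x v \<ge> 0" if "dist x (0,y0) < \<delta>" for x v
  proof -
    have "M x < c" using dM that .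
    then have "M x * norm v ^ 2 \<le> c * norm v ^ 2" by (simp add: mult_right_mono)
    then show ?thesis using Qdiff[of x v] Qlow[of v] by linarith
  qed
  obtain r0 where r0: "r0 > 0" "ball y0 r0 \<subseteq> V" using oV y0V openE by blast
  define r where "r = min r0 (\<delta>/2)"
  define \<epsilon> where "\<epsilon> = min \<zeta> (\<delta>/2)"
  have "\<forall>p z. norm p < \<epsilon> \<longrightarrow> z \<in> ball y0 r \<longrightarrow> F (p,y0) \<le> F (p,z)"
  proof (intro allI impI)
    fix p :: 'n and z :: 'e assume pe: "norm p < \<epsilon>" and zb: "z \<in> ball y0 r"
    define v where "v = z - y0"
    define \<gamma> where "\<gamma> t = y0 + t *\<^sub>R v" for t
    have gb: "dist y0 (\<gamma> t) < r" if "t \<in> {0..1}" for t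
    proof -
      have "dist y0 (\<gamma> t) = \<bar>t\<bar> * norm v" by (simp add: \<gamma>_def dist_norm)
      also have "\<dots> \<le> norm v" using that by (auto intro: mult_left_le_one_le)
      also have "\<dots> < r" using zb by (simp add: v_def dist_norm norm_minus_commute)
      finally show ?thesis .
    qed
    have gS: "(p, \<gamma> t) \<in> S" if "t \<in> {0..1}" for t
      using gb[OF that] r0 by (auto simp: S_def r_def)
    have gd: "dist (p, \<gamma> t) (0,y0) < \<delta>" if "t \<in> {0..1}" for t
    proof -
      have "dist p 0 < \<delta>/2" using pe by (simp add: \<epsilon>_def)
      moreover have "dist (\<gamma> t) y0 < \<delta>/2" using gb[OF that] by (simp add: r_def dist_commute)
      ultimately show ?thesis
        by (simp add: dist_Pair_Pair sqrt_sum_squares_half_less)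
    qed
    have dpath: "((\<lambda>t. (p, \<gamma> t)) has_derivative (\<lambda>s. (0, s *\<^sub>R v))) (at t)" for t
      unfolding \<gamma>_def by (auto intro!: derivative_eq_intros)
    define \<psi> where "\<psi> t = (\<Sum>j\<in>Basis. (v \<bullet> j) * G j (p, \<gamma> t))" for t
    define \<phi> where "\<phi> t = F (p, \<gamma> t)" for t
    have dpsi: "(\<psi> has_field_derivative Q (p, \<gamma> t) v) (at t)" if tI: "t \<in> {0..1}" for t
    proof -
      have "((\<lambda>t. G j (p, \<gamma> t)) has_derivative (\<lambda>s. DG j (p, \<gamma> t) (0, s *\<^sub>R v))) (at t)"
        if "j \<in> Basis" for j
        using diff_chain_at[OF dpath d2[OF gS[OF tI] that]] unfolding o_def by simp
      then have "(\<psi> has_derivative (\<lambda>s. \<Sum>j\<in>Basis. (v \<bullet> j) * DG j (p, \<gamma> t) (0, s *\<^sub>R v))) (at t)"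
        unfolding \<psi>_def by (intro has_derivative_sum has_derivative_mult_right) auto
      moreover have "(\<lambda>s. \<Sum>j\<in>Basis. (v \<bullet> j) * DG j (p, \<gamma> t) (0, s *\<^sub>R v)) = (*) (Q (p, \<gamma> t) v)"
      proof
        fix s
        have "(\<Sum>j\<in>Basis. (v \<bullet> j) * DG j (p, \<gamma> t) (0, s *\<^sub>R v))
            = (\<Sum>j\<in>Basis. (v \<bullet> j) * (\<Sum>i\<in>Basis. (s * (v \<bullet> i)) * H i j (p, \<gamma> t)))"
          using e2[OF gS[OF that]] by (intro sum.cong) auto
        also have "\<dots> = Q (p, \<gamma> t) v * s"
          unfolding Q_def by (subst sum.swap) (simp add: sum_distrib_left sum_distrib_right mult_ac)
        finally show "(\<Sum>j\<in>Basis. (v \<bullet> j) * DG j (p, \<gamma> t) (0, s *\<^sub>R v)) = Q (p, \<gamma> t) v * s" .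
      qed
      ultimately show ?thesis by (simp add: has_field_derivative_def)
    qed
    have dphi: "(\<phi> has_field_derivative \<psi> t) (at t)" if "t \<in> {0..1}" for t
    proof -
      have "(\<phi> has_derivative (\<lambda>s. DF (p, \<gamma> t) (0, s *\<^sub>R v))) (at t)"
        using diff_chain_at[OF dpath d1[OF gS[OF that]]] unfolding o_def \<phi>_def by simp
      moreover have "(\<lambda>s. DF (p, \<gamma> t) (0, s *\<^sub>R v)) = (*) (\<psi> t)"
      proof
        fix s
        show "DF (p, \<gamma> t) (0, s *\<^sub>R v) = \<psi> t * s"
          unfolding e1[OF gS[OF that]] \<psi>_def by (simp add: sum_distrib_left sum_distrib_right mult_ac)
      qed
      ultimately show ?thesis by (simp add: has_field_derivative_def)
    qed
    have pS: "(p,y0) \<in> S" using y0V by (simp add: S_def)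
    have "\<psi> 0 = DF (p,y0) (0,v)" by (simp add: \<psi>_def \<gamma>_def e1[OF pS])
    then have psi0: "\<psi> 0 = 0" using crit0[of p v] pe by (simp add: \<epsilon>_def)
    have psimon: "\<psi> t \<ge> 0" if "t \<in> {0..1}" for t
    proof -
      have "\<psi> 0 \<le> \<psi> t"
        by (rule DERIV_nonneg_imp_nondecreasing[of 0 t]) 
           (use that in \<open>auto intro!: exI dpsi Qnn gd\<close>)
      then show ?thesis using psi0 by simp
    qed
    have "\<phi> 0 \<le> \<phi> 1"
      by (rule DERIV_nonneg_imp_nondecreasing[of 0 1]) (auto intro!: exI dphi psimon)
    then show "F (p,y0) \<le> F (p,z)" by (simp add: \<phi>_def \<gamma>_def v_def)
  qed
  moreover have "\<epsilon> > 0" "r > 0" using zp d0 r0 by (auto simp: \<epsilon>_def r_def)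
  moreover have "ball y0 r \<subseteq> V" using r0 by (auto simp: r_def)
  ultimately show ?thesis by blast
qed


lemma joint_cont:
  fixes A :: "('a::{t2_space,second_countable_topology} set \<times> ('a \<Rightarrow> 'e::euclidean_space)) set"
    and f :: "'n::euclidean_space \<Rightarrow> 'a \<Rightarrow> real"
  assumes at: "smooth_atlas A" and sf: "smooth_param_fun A f"
  shows "continuous_on UNIV (\<lambda>q. f (fst q) (snd q))"
proof (rule continuous_at_imp_continuous_on, intro ballI)
  fix q :: "'n \<times> 'a"
  obtain p x where q: "q = (p,x)" by fastforce
  have "x \<in> (\<Union>(U,\<phi>)\<in>A. U)" using at by (simp add: smooth_atlas_def)
  then obtain U \<phi> where UA: "(U,\<phi>) \<in> A" and xU: "x \<in> U" by auto
  have oU: "open U" and oV: "open (\<phi> ` U)" and hom: "\<exists>\<psi>. homeomorphism U (\<phi> ` U) \<phi> \<psi>"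
    using at UA unfolding smooth_atlas_def by fast+
  from hom obtain \<psi> where h: "homeomorphism U (\<phi> ` U) \<phi> \<psi>" by blast
  have cphi: "continuous_on U \<phi>" and inj: "inj_on \<phi> U"
    using h unfolding homeomorphism_def by (auto intro: inj_on_inverseI)
  define F where "F = (\<lambda>(p,y). f p (inv_into U \<phi> y))"
  have "smooth_on (UNIV \<times> \<phi> ` U) F" using sf UA unfolding smooth_param_fun_def F_def by fast
  then have cF: "continuous_on (UNIV \<times> \<phi> ` U) F"
    unfolding smooth_on_def by (metis Ck_on.simps(1))
  define g where "g = (\<lambda>q::'n \<times> 'a. (fst q, \<phi> (snd q)))"
  have cg: "continuous_on (UNIV \<times> U) g"
    unfolding g_def
    by (intro continuous_intros continuous_on_compose2[OF cphi]) auto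
  have "continuous_on (UNIV \<times> U) (F \<circ> g)"
    by (rule continuous_on_compose[OF cg continuous_on_subset[OF cF]]) (auto simp: g_def)
  moreover have "(F \<circ> g) q' = f (fst q') (snd q')" if "q' \<in> UNIV \<times> U" for q'
    using that inj by (auto simp: F_def g_def)
  ultimately have "continuous_on (UNIV \<times> U) (\<lambda>q. f (fst q) (snd q))"
    using continuous_on_cong by (metis (no_types, lifting))
  moreover have "open ((UNIV::'n set) \<times> U)" using oU by (simp add: open_Times)
  moreover have "q \<in> UNIV \<times> U" using q xU by simp
  ultimately show "isCont (\<lambda>q. f (fst q) (snd q)) q"
    using continuous_on_eq_continuous_at by blast
qed

theorem lemma2p12:
  fixes A :: "('a::{t2_space,second_countable_topology} set \<times> ('a \<Rightarrow> 'e::euclidean_space)) set"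
    and f :: "'n::euclidean_space \<Rightarrow> 'a \<Rightarrow> real"
    and C :: "'a set" and x0 :: 'a and \<zeta> :: real
  assumes "smooth_atlas A"
    and "compact C"
    and "smooth_param_fun A f"
    and "x0 \<in> C"
    and "\<forall>x\<in>C. f 0 x0 \<le> f 0 x"
    and "\<forall>x\<in>C. f 0 x = f 0 x0 \<longrightarrow> x = x0"
    and "critical_point A (f 0) x0"
    and "pos_def_hessian_at A (f 0) x0"
    and "\<zeta> > 0"
    and "\<forall>p. norm p < \<zeta> \<longrightarrow> critical_point A (f p) x0"
  shows "\<exists>\<epsilon>>0. \<forall>p::'n. norm p < \<epsilon> \<longrightarrow> (\<forall>x\<in>C. f p x0 \<le> f p x)"
proof -
  note at = assms(1) and sf = assms(3)
  have "x0 \<in> (\<Union>(U,\<phi>)\<in>A. U)" using at by (simp add: smooth_atlas_def)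
  then obtain U \<phi> where UA: "(U,\<phi>) \<in> A" and xU: "x0 \<in> U" by auto
  have oU: "open U" and oV: "open (\<phi> ` U)" and hom: "\<exists>\<psi>. homeomorphism U (\<phi> ` U) \<phi> \<psi>"
    using at UA unfolding smooth_atlas_def by fast+
  from hom obtain \<psi> where h: "homeomorphism U (\<phi> ` U) \<phi> \<psi>" by blast
  have cphi: "continuous_on U \<phi>" and inj: "inj_on \<phi> U"
    using h unfolding homeomorphism_def by (auto intro: inj_on_inverseI)
  define F where "F = (\<lambda>(p,y). f p (inv_into U \<phi> y))"
  have smF: "smooth_on (UNIV \<times> \<phi> ` U) F" using sf UA unfolding smooth_param_fun_def F_def by fast
  have Feq: "(\<lambda>y. F (p,y)) = f p \<circ> inv_into U \<phi>" for p by (simp add: F_def o_def)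
  have crit: "\<forall>p. norm p < \<zeta> \<longrightarrow> ((\<lambda>y. F (p,y)) has_derivative (\<lambda>_. 0)) (at (\<phi> x0))"
    using assms(10) UA xU unfolding critical_point_def Feq by fast
  have pd: "pos_def_hessian (\<lambda>y. F (0,y)) (\<phi> x0)"
    using assms(8) UA xU unfolding pos_def_hessian_at_def Feq by fast
  obtain \<epsilon>1 r where e1: "\<epsilon>1 > 0" "r > 0" "ball (\<phi> x0) r \<subseteq> \<phi> ` U"
    and loc: "\<And>p z. norm p < \<epsilon>1 \<Longrightarrow> z \<in> ball (\<phi> x0) r \<Longrightarrow> F (p, \<phi> x0) \<le> F (p,z)"
    using local_min[OF smF oV imageI[OF xU] crit pd assms(9)] by blast
  define N where "N = U \<inter> \<phi> -` ball (\<phi> x0) r"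
  have oN: "open N" using continuous_on_open_vimage[OF oU] cphi unfolding N_def
    by (metis open_ball Int_commute)
  have x0N: "x0 \<in> N" using xU e1 by (simp add: N_def)
  have locN: "f p x0 \<le> f p x" if "norm p < \<epsilon>1" "x \<in> N" for p x
    using loc[OF that(1), of "\<phi> x"] that(2) xU inj by (simp add: N_def F_def)
  define K where "K = C \<inter> - N"
  have cK: "compact K" unfolding K_def using assms(2) oN by auto
  define Opn where "Opn = {q::'n \<times> 'a. f (fst q) x0 < f (fst q) (snd q)}"
  have cP: "continuous_on UNIV (\<lambda>q::'n \<times> 'a. f (fst q) (snd q))" by (rule joint_cont[OF at sf])
  have cP0: "continuous_on UNIV (\<lambda>q::'n \<times> 'a. f (fst q) x0)"
  proof -
    have "continuous_on UNIV (\<lambda>q::'n \<times> 'a. (fst q, x0))" by (intro continuous_intros)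
    from continuous_on_compose2[OF cP this] show ?thesis by simp
  qed
  have oO: "open Opn" unfolding Opn_def by (rule open_Collect_less[OF cP0 cP])
  have "{0} \<times> K \<subseteq> Opn"
  proof
    fix q :: "'n \<times> 'a" assume "q \<in> {0} \<times> K"
    then obtain x where q: "q = (0,x)" and xK: "x \<in> K" by auto
    then have "x \<in> C" "x \<noteq> x0" using x0N by (auto simp: K_def)
    then have "f 0 x0 < f 0 x" using assms(5,6) by force
    then show "q \<in> Opn" by (simp add: Opn_def q)
  qed
  from Elementary_Topology.tube_lemma[OF cK oO this] obtain X0 where X0: "0 \<in> X0" "open X0" "X0 \<times> K \<subseteq> Opn" by blast
  obtain \<epsilon>2 where e2: "\<epsilon>2 > 0" "ball 0 \<epsilon>2 \<subseteq> X0" using X0 openE by blast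
  have "\<forall>p::'n. norm p < min \<epsilon>1 \<epsilon>2 \<longrightarrow> (\<forall>x\<in>C. f p x0 \<le> f p x)"
  proof (intro allI impI ballI)
    fix p :: 'n and x assume p: "norm p < min \<epsilon>1 \<epsilon>2" and xC: "x \<in> C"
    show "f p x0 \<le> f p x"
    proof (cases "x \<in> N")
      case True then show ?thesis using locN p by simp
    next
      case False
      then have "x \<in> K" using xC by (simp add: K_def)
      moreover have "p \<in> X0" using e2 p by auto
      ultimately have "(p,x) \<in> Opn" using X0 by blast
      then show ?thesis by (simp add: Opn_def)
    qed
  qed
  moreover have "min \<epsilon>1 \<epsilon>2 > 0" using e1 e2 by simp
  ultimately show ?thesis by blast
qed

end
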